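(* The collection $\mathrm{Cov}(\mathrm{St}\mathbb{C}^n)$ of covering families makes the category $\mathrm{St}\mathbb{C}^n$ into a Verdier site.
   Context: $\mathrm{St}\mathbb{C}^n$ is the category whose objects are $n$-dimensional Stein manifolds that are biholomorphic to an open subset of $\mathbb{C}^n$ (the empty manifold is included as an initial object, so that "empty pullbacks" exist), and whose morphisms are holomorphic embeddings, i.e. holomorphic maps that are biholomorphisms onto their (open) image. A family $\{U_i \xrightarrow{f_i} U\}_{i\in I}$ of morphisms of $\mathrm{St}\mathbb{C}^n$ is a covering family if $\bigcup_{i\in I} f_i(U_i) = U$; $\mathrm{Cov}(\mathrm{St}\mathbb{C}^n)$ denotes the collection of all covering families. A site is a category $\mathscr{C}$ with a collection $\mathrm{Cov}(\mathscr{C})$ of families $\{U_i\to U\}_{i\in I}$ of morphisms such that: (i) for every isomorphism $f:U'\to U$, $\{f\}$ is in $\mathrm{Cov}(\mathscr{C})$; (ii) if $\{U_i\to U\}_{i\in I}\in\mathrm{Cov}(\mathscr{C})$ and for each $i$, $\{V_{i,j}\to U_i\}_{j\in J_i}\in \mathrm{Cov}(\mathscr{C})$, then $\{V_{i,j}\to U_i\to U\}_{i,j}\in\mathrm{Cov}(\mathscr{C})$; (iii) if $\{U_i\to U\}_{i\in I}\in\mathrm{Cov}(\mathscr{C})$ and $V\to U$ is any morphism, then the fibre products $U_i\times_U V$ exist in $\mathscr{C}$ and $\{U_i\times_U V\to V\}_{i\in I}\in\mathrm{Cov}(\mathscr{C})$. A morphism is basal if it belongs to some covering family; a Verdier site is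 a site such that additionally (iv) for every basal morphism $V\to U$, the diagonal $V\to V\times_U V$ is basal. *)

theory Defs
  imports "HOL-Analysis.Analysis"
begin

type_synonym 'n cpt = "complex ^ 'n"

definition holo_fun :: "('n::finite cpt \<Rightarrow> complex) \<Rightarrow> 'n cpt set \<Rightarrow> bool" where
  "holo_fun f U \<longleftrightarrow>
     (\<forall>x\<in>U. \<exists>L. (f has_derivative L) (at x) \<and> (\<forall>(c::complex) v. L (c *s v) = c * L v))"

definition holo_map :: "('n::finite cpt \<Rightarrow> 'm::finite cpt) \<Rightarrow> 'n cpt set \<Rightarrow> bool" where
  "holo_map f U \<longleftrightarrow> (\<forall>i. holo_fun (\<lambda>z. f z $ i) U)"

definition holo_hull :: "'n::finite cpt set \<Rightarrow> 'n cpt set \<Rightarrow> 'n cpt set" where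
  "holo_hull U K = {z \<in> U. \<forall>f. holo_fun f U \<longrightarrow>
        (\<forall>b::real. (\<forall>w\<in>K. cmod (f w) \<le> b) \<longrightarrow> cmod (f z) \<le> b)}"

text \<open>An open subset of C^n which is a Stein manifold: holomorphically convex and
  holomorphically separable (local coordinates are automatic for open subsets of C^n).\<close>
definition stein_open :: "'n::finite cpt set \<Rightarrow> bool" where
  "stein_open U \<longleftrightarrow> open U \<and>
     (\<forall>K. compact K \<and> K \<subseteq> U \<longrightarrow> compact (holo_hull U K)) \<and>
     (\<forall>x\<in>U. \<forall>y\<in>U. x \<noteq> y \<longrightarrow> (\<exists>f. holo_fun f U \<and> f x \<noteq> f y))"

text \<open>Morphisms W \<rightarrow> U of StC^n: holomorphic embeddings (biholomorphic onto open image).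
  A morphism is represented by a map on C^n; only its values on W matter.\<close>
definition hemb :: "'n::finite cpt set \<Rightarrow> 'n cpt set \<Rightarrow> ('n cpt \<Rightarrow> 'n cpt) \<Rightarrow> bool" where
  "hemb W U f \<longleftrightarrow> stein_open W \<and> stein_open U \<and> holo_map f W \<and> f ` W \<subseteq> U \<and> inj_on f W \<and>
     open (f ` W) \<and> (\<exists>g. holo_map g (f ` W) \<and> (\<forall>x\<in>W. g (f x) = x))"

definition hiso :: "'n::finite cpt set \<Rightarrow> 'n cpt set \<Rightarrow> ('n cpt \<Rightarrow> 'n cpt) \<Rightarrow> bool" where
  "hiso W U f \<longleftrightarrow> hemb W U f \<and>
     (\<exists>g. hemb U W g \<and> (\<forall>x\<in>W. g (f x) = x) \<and> (\<forall>y\<in>U. f (g y) = y))"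

definition covering :: "'n::finite cpt set \<Rightarrow> ('n cpt set \<times> ('n cpt \<Rightarrow> 'n cpt)) set \<Rightarrow> bool" where
  "covering U F \<longleftrightarrow> stein_open U \<and> (\<forall>(W, g)\<in>F. hemb W U g) \<and> (\<Union>(W, g)\<in>F. g ` W) = U"

definition basal :: "'n::finite cpt set \<Rightarrow> 'n cpt set \<Rightarrow> ('n cpt \<Rightarrow> 'n cpt) \<Rightarrow> bool" where
  "basal V U f \<longleftrightarrow> (\<exists>F. (V, f) \<in> F \<and> covering U F)"

text \<open>(P, p1, p2) is a fibre product of f1 : U1 \<rightarrow> U and f2 : U2 \<rightarrow> U in StC^n
  (morphisms being equal iff they agree on their domain).\<close>
definition is_pullback ::
  "'n::finite cpt set \<Rightarrow> 'n cpt set \<Rightarrow> ('n cpt \<Rightarrow> 'n cpt) \<Rightarrow> 'n cpt set \<Rightarrow> ('n cpt \<Rightarrow> 'n cpt)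
   \<Rightarrow> 'n cpt set \<Rightarrow> ('n cpt \<Rightarrow> 'n cpt) \<Rightarrow> ('n cpt \<Rightarrow> 'n cpt) \<Rightarrow> bool" where
  "is_pullback U U1 f1 U2 f2 P p1 p2 \<longleftrightarrow>
     hemb U1 U f1 \<and> hemb U2 U f2 \<and> hemb P U1 p1 \<and> hemb P U2 p2 \<and>
     (\<forall>x\<in>P. f1 (p1 x) = f2 (p2 x)) \<and>
     (\<forall>W g1 g2. hemb W U1 g1 \<and> hemb W U2 g2 \<and> (\<forall>x\<in>W. f1 (g1 x) = f2 (g2 x)) \<longrightarrow>
        (\<exists>h. hemb W P h \<and> (\<forall>x\<in>W. p1 (h x) = g1 x) \<and> (\<forall>x\<in>W. p2 (h x) = g2 x) \<and>
             (\<forall>h'. hemb W P h' \<and> (\<forall>x\<in>W. p1 (h' x) = g1 x) \<and> (\<forall>x\<in>W. p2 (h' x) = g2 x)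
                   \<longrightarrow> (\<forall>x\<in>W. h' x = h x))))"

definition StC_site_iso :: "'n::finite itself \<Rightarrow> bool" where
  "StC_site_iso _ \<longleftrightarrow> (\<forall>(U'::'n cpt set) U f. hiso U' U f \<longrightarrow> covering U {(U', f)})"

definition StC_site_comp :: "'n::finite itself \<Rightarrow> bool" where
  "StC_site_comp _ \<longleftrightarrow> (\<forall>(U::'n cpt set) F G.
     covering U F \<and> (\<forall>(Ui, fi)\<in>F. covering Ui (G (Ui, fi))) \<longrightarrow>
     covering U {(W, fi \<circ> g) | Ui fi W g. (Ui, fi) \<in> F \<and> (W, g) \<in> G (Ui, fi)})"

definition StC_site_pullback :: "'n::finite itself \<Rightarrow> bool" where
  "StC_site_pullback _ \<longleftrightarrow> (\<forall>(U::'n cpt set) F V g.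
     covering U F \<and> hemb V U g \<longrightarrow>
     (\<forall>(Ui, fi)\<in>F. \<exists>P p1 p2. is_pullback U Ui fi V g P p1 p2) \<and>
     (\<forall>P p1 p2. (\<forall>(Ui, fi)\<in>F. is_pullback U Ui fi V g (P (Ui, fi)) (p1 (Ui, fi)) (p2 (Ui, fi)))
        \<longrightarrow> covering V {(P (Ui, fi), p2 (Ui, fi)) | Ui fi. (Ui, fi) \<in> F}))"

definition StC_verdier_diag :: "'n::finite itself \<Rightarrow> bool" where
  "StC_verdier_diag _ \<longleftrightarrow> (\<forall>(V::'n cpt set) U f P p1 p2 d.
     basal V U f \<and> is_pullback U V f V f P p1 p2 \<and>
     hemb V P d \<and> (\<forall>x\<in>V. p1 (d x) = x) \<and> (\<forall>x\<in>V. p2 (d x) = x) \<longrightarrow> basal V P d)"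

definition StC_verdier_site :: "'n::finite itself \<Rightarrow> bool" where
  "StC_verdier_site T \<longleftrightarrow> StC_site_iso T \<and> StC_site_comp T \<and> StC_site_pullback T \<and> StC_verdier_diag T"

end

theory Submission
  imports Defs
begin
lemma has_derivative_vec:
  fixes f :: "'n::finite cpt \<Rightarrow> 'm::finite cpt"
  assumes "\<And>i. ((\<lambda>z. f z $ i) has_derivative L i) (at x)"
  shows "(f has_derivative (\<lambda>v. \<chi> i. L i v)) (at x)"
proof -
  have bl: "bounded_linear (L i)" for i using assms has_derivative_bounded_linear by blast
  have lin: "linear (\<lambda>v. \<chi> i. L i v)"
  proof -
    have li: "linear (L i)" for i using bl bounded_linear.linear by blast
    have a: "L i (x + y) = L i x + L i y" "L i (c *\<^sub>R x) = c *\<^sub>R L i x" for i x y c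
      using li[of i] unfolding linear_iff by blast+
    show ?thesis unfolding linear_iff by (simp add: vec_eq_iff a)
  qed
  have "bounded_linear (\<lambda>v. \<chi> i. L i v)"
    using lin linear_conv_bounded_linear by blast
  moreover have "((\<lambda>y. ((f y - f x) - (\<chi> i. L i (y - x))) /\<^sub>R norm (y - x)) \<longlongrightarrow> 0) (at x)"
  proof (rule vec_tendstoI)
    fix i
    have "((\<lambda>y. ((f y $ i - f x $ i) - L i (y - x)) /\<^sub>R norm (y - x)) \<longlongrightarrow> 0) (at x)"
      using assms[of i] by (simp add: has_derivative_at_within[where s=UNIV, simplified])
    then show "((\<lambda>y. (((f y - f x) - (\<chi> i. L i (y - x))) /\<^sub>R norm (y - x)) $ i) \<longlongrightarrow> 0 $ i) (at x)"
      by simp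
  qed
  ultimately show ?thesis
    by (simp add: has_derivative_at_within[where s=UNIV, simplified])
qed

lemma holo_map_deriv:
  assumes "holo_map g V" "x \<in> V"
  shows "\<exists>M. (g has_derivative M) (at x) \<and> (\<forall>c v. M (c *s v) = c *s M v)"
proof -
  have "\<forall>i. \<exists>L. ((\<lambda>z. g z $ i) has_derivative L) (at x) \<and> (\<forall>(c::complex) v. L (c *s v) = c * L v)"
    using assms unfolding holo_map_def holo_fun_def by blast
  then obtain L where L: "\<And>i. ((\<lambda>z. g z $ i) has_derivative L i) (at x)"
    "\<And>i c v. L i (c *s v) = c * L i v" by metis
  have "(g has_derivative (\<lambda>v. \<chi> i. L i v)) (at x)" by (rule has_derivative_vec[OF L(1)])
  moreover have "\<forall>c v. (\<chi> i. L i (c *s v)) = c *s (\<chi> i. L i v)"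
    using L(2) by (simp add: vec_eq_iff)
  ultimately show ?thesis by blast
qed

lemma holo_fun_comp:
  assumes "holo_map g V" "holo_fun f W" "g ` V \<subseteq> W"
  shows "holo_fun (\<lambda>z. f (g z)) V"
  unfolding holo_fun_def
proof
  fix x assume x: "x \<in> V"
  obtain M where M: "(g has_derivative M) (at x)" "\<forall>c v. M (c *s v) = c *s M v"
    using holo_map_deriv[OF assms(1) x] by blast
  obtain L where L: "(f has_derivative L) (at (g x))" "\<forall>(c::complex) v. L (c *s v) = c * L v"
    using assms(2,3) x unfolding holo_fun_def by blast
  have "((f \<circ> g) has_derivative (L \<circ> M)) (at x)" by (rule diff_chain_at[OF M(1) L(1)])
  then have "((\<lambda>z. f (g z)) has_derivative (\<lambda>v. L (M v))) (at x)" by (simp add: o_def)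
  moreover have "\<forall>(c::complex) v. L (M (c *s v)) = c * L (M v)" using M(2) L(2) by simp
  ultimately show "\<exists>L. ((\<lambda>z. f (g z)) has_derivative L) (at x) \<and> (\<forall>(c::complex) v. L (c *s v) = c * L v)"
    by blast
qed

lemma holo_map_comp:
  assumes "holo_map g V" "holo_map f W" "g ` V \<subseteq> W"
  shows "holo_map (\<lambda>z. f (g z)) V"
  using assms holo_fun_comp unfolding holo_map_def by blast

lemma holo_fun_subset: "holo_fun f U \<Longrightarrow> W \<subseteq> U \<Longrightarrow> holo_fun f W"
  unfolding holo_fun_def by blast

lemma holo_map_subset: "holo_map f U \<Longrightarrow> W \<subseteq> U \<Longrightarrow> holo_map f W"
  unfolding holo_map_def using holo_fun_subset by blast

lemma holo_map_id: "holo_map (\<lambda>z. z) U"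
  unfolding holo_map_def holo_fun_def
  by (auto intro!: exI[where x="\<lambda>v. v $ _"] bounded_linear_imp_has_derivative)

lemma holo_fun_const: "holo_fun (\<lambda>z. c) U"
  unfolding holo_fun_def by (auto intro!: exI[where x="\<lambda>v. 0"])

lemma holo_fun_cont: "holo_fun f U \<Longrightarrow> continuous_on U f"
  unfolding holo_fun_def
  by (meson continuous_at_imp_continuous_on has_derivative_continuous)

lemma holo_map_cont:
  assumes "holo_map f U" shows "continuous_on U f"
proof -
  have "continuous_on U (\<lambda>x. \<chi> i. f x $ i)"
    using assms holo_fun_cont unfolding holo_map_def by (intro continuous_on_vec_lambda) blast
  then show ?thesis by simp
qed

lemma hemb_cont: "hemb W U f \<Longrightarrow> continuous_on W f"
  unfolding hemb_def using holo_map_cont by blast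

lemma hemb_open_image:
  assumes "hemb W U f" "A \<subseteq> W" "open A"
  shows "open (f ` A)"
proof -
  obtain finv where fi: "holo_map finv (f ` W)" "\<forall>x\<in>W. finv (f x) = x" and o: "open (f ` W)"
    using assms(1) unfolding hemb_def by blast
  have "f ` A = finv -` A \<inter> f ` W" using assms(2) fi(2) by force
  moreover have "open (finv -` A \<inter> f ` W)"
    using holo_map_cont[OF fi(1)] o assms(3) continuous_on_open_vimage by blast
  ultimately show ?thesis by simp
qed

lemma hemb_comp:
  assumes "hemb W V g" "hemb V U f"
  shows "hemb W U (\<lambda>x. f (g x))"
proof -
  obtain ginv where gi: "holo_map ginv (g ` W)" "\<forall>x\<in>W. ginv (g x) = x"
    using assms(1) unfolding hemb_def by blast
  obtain finv where fi: "holo_map finv (f ` V)" "\<forall>x\<in>V. finv (f x) = x"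
    using assms(2) unfolding hemb_def by blast
  have gV: "g ` W \<subseteq> V" "open (g ` W)" using assms(1) unfolding hemb_def by auto
  have fU: "f ` V \<subseteq> U" "inj_on f V" "holo_map f V" "stein_open U" using assms(2) unfolding hemb_def by auto
  have gW: "inj_on g W" "holo_map g W" "stein_open W" using assms(1) unfolding hemb_def by auto
  have h1: "holo_map (\<lambda>x. f (g x)) W"
    using holo_map_comp[OF gW(2) fU(3) gV(1)] .
  have h2: "(\<lambda>x. f (g x)) ` W \<subseteq> U" using gV(1) fU(1) by auto
  have h3: "inj_on (\<lambda>x. f (g x)) W"
    using comp_inj_on[OF gW(1) inj_on_subset[OF fU(2) gV(1)]] by (simp add: o_def)
  have h4: "open ((\<lambda>x. f (g x)) ` W)"
    using hemb_open_image[OF assms(2) gV(1,2)] by (simp add: image_image)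
  have h5: "holo_map (\<lambda>y. ginv (finv y)) ((\<lambda>x. f (g x)) ` W)"
  proof (rule holo_map_comp[OF _ gi(1)])
    show "holo_map finv ((\<lambda>x. f (g x)) ` W)" 
      by (rule holo_map_subset[OF fi(1)]) (use gV in auto)
    show "finv ` (\<lambda>x. f (g x)) ` W \<subseteq> g ` W" using fi(2) gV by auto
  qed
  have h6: "\<forall>x\<in>W. ginv (finv (f (g x))) = x" using gi(2) fi(2) gV by auto
  have h7: "\<exists>k. holo_map k ((\<lambda>x. f (g x)) ` W) \<and> (\<forall>x\<in>W. k (f (g x)) = x)"
    using h5 h6 by blast
  show ?thesis unfolding hemb_def
    using gW(3) fU(4) h1 h2 h3 h4 h7 by (intro conjI) assumption+
qed


lemma stein_pb:
  assumes hf: "hemb Ui U fi" and hg: "hemb V U g"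
    and finv: "holo_map finv (fi ` Ui)" "\<forall>x\<in>Ui. finv (fi x) = x"
  shows "stein_open {v\<in>V. g v \<in> fi ` Ui}"
proof -
  define P where "P = {v\<in>V. g v \<in> fi ` Ui}"
  have sV: "stein_open V" and sUi: "stein_open Ui" using hf hg unfolding hemb_def by auto
  have oV: "open V" using sV unfolding stein_open_def by auto
  have oUi: "open Ui" using sUi unfolding stein_open_def by auto
  have ofi: "open (fi ` Ui)" using hf unfolding hemb_def by auto
  have gh: "holo_map g V" using hg unfolding hemb_def by auto
  have cg: "continuous_on V g" using hemb_cont[OF hg] .
  have cfi: "continuous_on Ui fi" using hemb_cont[OF hf] .
  have PV: "P \<subseteq> V" unfolding P_def by auto
  have oP: "open P"
  proof -
    have "open (g -` (fi ` Ui) \<inter> V)" using cg oV ofi continuous_on_open_vimage by blast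
    moreover have "P = g -` (fi ` Ui) \<inter> V" unfolding P_def by auto
    ultimately show ?thesis by simp
  qed
  have hP: "holo_map (\<lambda>z. finv (g z)) P"
    by (rule holo_map_comp[OF holo_map_subset[OF gh PV] finv(1)]) (auto simp: P_def)
  have PUi: "finv (g z) \<in> Ui" if "z \<in> P" for z
    using that finv(2) unfolding P_def by auto
  have hull: "compact (holo_hull P K)" if K: "compact K" "K \<subseteq> P" for K
  proof -
    define K' where "K' = (\<lambda>z. finv (g z)) ` K"
    have cK': "compact K'" unfolding K'_def
      by (rule compact_continuous_image[OF continuous_on_subset[OF holo_map_cont[OF hP] K(2)] K(1)])
    have K'Ui: "K' \<subseteq> Ui" unfolding K'_def using K(2) PUi by auto
    define C where "C = holo_hull Ui K'"
    have cC: "compact C" using sUi cK' K'Ui unfolding C_def stein_open_def by blast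
    have CUi: "C \<subseteq> Ui" unfolding C_def holo_hull_def by auto
    define H where "H = holo_hull V K"
    have cH: "compact H" using sV K PV unfolding H_def stein_open_def by blast
    have HV: "H \<subseteq> V" unfolding H_def holo_hull_def by auto
    define S where "S = H \<inter> g -` (fi ` C)"
    have clC: "closed (fi ` C)"
      using compact_imp_closed compact_continuous_image[OF continuous_on_subset[OF cfi CUi] cC] by blast
    have cS: "compact S"
    proof -
      have "closedin (top_of_set H) (H \<inter> g -` (fi ` C))"
        by (rule continuous_closedin_preimage[OF continuous_on_subset[OF cg HV] clC])
      then show ?thesis unfolding S_def using closedin_compact cH by blast
    qed
    have SP: "S \<subseteq> P" unfolding S_def P_def using HV CUi by auto
    have hS: "holo_hull P K \<subseteq> S"
    proof
      fix z assume z: "z \<in> holo_hull P K"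
      then have zP: "z \<in> P" unfolding holo_hull_def by auto
      have zb: "\<And>f b. holo_fun f P \<Longrightarrow> (\<forall>w\<in>K. cmod (f w) \<le> b) \<Longrightarrow> cmod (f z) \<le> b"
        using z unfolding holo_hull_def by auto
      have "z \<in> H" unfolding H_def holo_hull_def
        using zP PV zb holo_fun_subset[OF _ PV] by blast
      moreover have "finv (g z) \<in> C" unfolding C_def holo_hull_def
      proof (intro CollectI conjI allI impI)
        show "finv (g z) \<in> Ui" using PUi zP .
        fix f :: "'a cpt \<Rightarrow> complex" and b :: real
        assume f: "holo_fun f Ui" and bd: "\<forall>w\<in>K'. cmod (f w) \<le> b"
        have "holo_fun (\<lambda>z. f (finv (g z))) P"
          by (rule holo_fun_comp[OF hP f]) (use PUi in auto)
        moreover have "\<forall>w\<in>K. cmod (f (finv (g w))) \<le> b" using bd unfolding K'_def by auto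
        ultimately show "cmod (f (finv (g z))) \<le> b" using zb by blast
      qed
      moreover have "g z = fi (finv (g z))" using zP finv(2) unfolding P_def by auto
      ultimately show "z \<in> S" unfolding S_def by (metis IntI image_eqI vimageI)
    qed
    define I where "I = {(f, b). holo_fun f P \<and> (\<forall>w\<in>K. cmod (f w) \<le> (b::real))}"
    have Ine: "I \<noteq> {}" unfolding I_def using holo_fun_const[of 0 P] by auto
    have eq: "holo_hull P K = (\<Inter>(f, b)\<in>I. P \<inter> (\<lambda>z. cmod (f z)) -` {..b})"
    proof
      show "holo_hull P K \<subseteq> (\<Inter>(f, b)\<in>I. P \<inter> (\<lambda>z. cmod (f z)) -` {..b})"
        unfolding holo_hull_def I_def by auto
      show "(\<Inter>(f, b)\<in>I. P \<inter> (\<lambda>z. cmod (f z)) -` {..b}) \<subseteq> holo_hull P K"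
        using Ine unfolding holo_hull_def I_def by auto
    qed
    have "closedin (top_of_set P) (\<Inter>(f, b)\<in>I. P \<inter> (\<lambda>z. cmod (f z)) -` {..b})"
    proof (rule closedin_INT[OF Ine])
      fix x assume "x \<in> I"
      then obtain f b where x: "x = (f, b)" "holo_fun f P" unfolding I_def by auto
      have "closedin (top_of_set P) (P \<inter> (\<lambda>z. cmod (f z)) -` {..b})"
        by (rule continuous_closedin_preimage[OF continuous_on_norm[OF holo_fun_cont[OF x(2)]] closed_atMost])
      then show "closedin (top_of_set P) (case x of (f, b) \<Rightarrow> P \<inter> (\<lambda>z. cmod (f z)) -` {..b})"
        using x by simp
    qed
    then have "closedin (top_of_set P) (holo_hull P K)" using eq by simp
    then have "closedin (top_of_set S) (holo_hull P K)"
      using closedin_subset_trans hS SP by blast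
    then show ?thesis using closedin_compact cS by blast
  qed
  have sep: "\<exists>f. holo_fun f P \<and> f x \<noteq> f y" if "x \<in> P" "y \<in> P" "x \<noteq> y" for x y
    using sV that PV holo_fun_subset[OF _ PV] unfolding stein_open_def by blast
  show ?thesis unfolding P_def[symmetric] stein_open_def using oP hull sep by blast
qed


lemma site_iso: "StC_site_iso TYPE('n::finite)"
  unfolding StC_site_iso_def
proof (intro allI impI)
  fix U' U :: "'n cpt set" and f
  assume "hiso U' U f"
  then obtain g where h: "hemb U' U f" "hemb U U' g" "\<forall>y\<in>U. f (g y) = y"
    unfolding hiso_def by blast
  have "f ` U' = U"
  proof
    show "f ` U' \<subseteq> U" using h(1) unfolding hemb_def by auto
    show "U \<subseteq> f ` U'"
    proof
      fix y assume "y \<in> U"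
      then have "g y \<in> U'" "f (g y) = y" using h(2,3) unfolding hemb_def by auto
      then show "y \<in> f ` U'" by (metis image_eqI)
    qed
  qed
  then show "covering U {(U', f)}" using h(1) unfolding covering_def hemb_def by auto
qed

lemma site_comp: "StC_site_comp TYPE('n::finite)"
  unfolding StC_site_comp_def
proof (intro allI impI)
  fix U :: "'n cpt set" and F G
  assume a: "covering U F \<and> (\<forall>(Ui, fi)\<in>F. covering Ui (G (Ui, fi)))"
  define FG where "FG = {(W, fi \<circ> g) | Ui fi W g. (Ui, fi) \<in> F \<and> (W, g) \<in> G (Ui, fi)}"
  have sU: "stein_open U" using a unfolding covering_def by auto
  have memb: "hemb W U h" if m0: "(W, h) \<in> FG" for W h
  proof -
    obtain Ui fi g where m: "h = fi \<circ> g" "(Ui, fi) \<in> F" "(W, g) \<in> G (Ui, fi)"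
      using m0 unfolding FG_def by blast
    have "hemb Ui U fi" using a m(2) unfolding covering_def by auto
    moreover have "hemb W Ui g" using a m(2,3) unfolding covering_def by fastforce
    ultimately show ?thesis using hemb_comp m(1) by (simp add: o_def)
  qed
  have un: "(\<Union>(W, h)\<in>FG. h ` W) = U"
  proof
    show "(\<Union>(W, h)\<in>FG. h ` W) \<subseteq> U" using memb unfolding hemb_def by fast
    show "U \<subseteq> (\<Union>(W, h)\<in>FG. h ` W)"
    proof
      fix y assume "y \<in> U"
      then obtain Ui fi where m: "(Ui, fi) \<in> F" "y \<in> fi ` Ui"
        using a unfolding covering_def by auto
      then obtain u where u: "u \<in> Ui" "y = fi u" by auto
      have "covering Ui (G (Ui, fi))" using a m(1) by auto
      then have "u \<in> (\<Union>(W, g)\<in>G (Ui, fi). g ` W)"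
        using u(1) unfolding covering_def by auto
      then obtain W g where w: "(W, g) \<in> G (Ui, fi)" "u \<in> g ` W" by auto
      have "(W, fi \<circ> g) \<in> FG" unfolding FG_def using m(1) w(1) by blast
      moreover have "y \<in> (fi \<circ> g) ` W" using w(2) u(2) by auto
      ultimately show "y \<in> (\<Union>(W, h)\<in>FG. h ` W)" by blast
    qed
  qed
  show "covering U FG" unfolding covering_def using sU memb un by blast
qed

lemma site_diag: "StC_verdier_diag TYPE('n::finite)"
  unfolding StC_verdier_diag_def
proof (intro allI impI)
  fix V U :: "'n cpt set" and f P p1 p2 d
  assume a: "basal V U f \<and> is_pullback U V f V f P p1 p2 \<and> hemb V P d \<and>
     (\<forall>x\<in>V. p1 (d x) = x) \<and> (\<forall>x\<in>V. p2 (d x) = x)"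
  have hf: "hemb V U f" and h1: "hemb P V p1" and h2: "hemb P V p2"
    and cm: "\<forall>x\<in>P. f (p1 x) = f (p2 x)"
    using a unfolding is_pullback_def by auto
  have hd: "hemb V P d" using a by auto
  have "d ` V = P"
  proof
    show "d ` V \<subseteq> P" using hd unfolding hemb_def by auto
    show "P \<subseteq> d ` V"
    proof
      fix x assume x: "x \<in> P"
      have "p1 x \<in> V" "p2 x \<in> V" using x h1 h2 unfolding hemb_def by auto
      then have e: "p1 x = p2 x" using cm x hf unfolding hemb_def inj_on_def by metis
      have dV: "d (p2 x) \<in> P" using hd \<open>p2 x \<in> V\<close> unfolding hemb_def by auto
      have "p2 (d (p2 x)) = p2 x" using a \<open>p2 x \<in> V\<close> by auto
      then have "d (p2 x) = x" using h2 dV x unfolding hemb_def inj_on_def by metis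
      then show "x \<in> d ` V" using \<open>p2 x \<in> V\<close> by (metis image_eqI)
    qed
  qed
  then have "covering P {(V, d)}" using hd unfolding covering_def hemb_def by auto
  then show "basal V P d" unfolding basal_def by blast
qed


lemma hemb_restrict:
  assumes "hemb W V h" "stein_open P" "h ` W \<subseteq> P"
  shows "hemb W P h"
  using assms unfolding hemb_def by blast

lemma pb_exists:
  assumes hf: "hemb Ui U fi" and hg: "hemb V U g"
    and finv: "holo_map finv (fi ` Ui)" "\<forall>x\<in>Ui. finv (fi x) = x"
  shows "is_pullback U Ui fi V g {v\<in>V. g v \<in> fi ` Ui} (\<lambda>z. finv (g z)) (\<lambda>z. z)"
proof -
  define P where "P = {v\<in>V. g v \<in> fi ` Ui}"
  have sP: "stein_open P" unfolding P_def by (rule stein_pb[OF hf hg finv])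
  have sV: "stein_open V" and sUi: "stein_open Ui" using hf hg unfolding hemb_def by auto
  have oUi: "open Ui" using sUi unfolding stein_open_def by auto
  have oP: "open P" using sP unfolding stein_open_def by auto
  have gh: "holo_map g V" and ogV: "open (g ` V)" and ig: "inj_on g V"
    using hg unfolding hemb_def by auto
  obtain ginv where gi: "holo_map ginv (g ` V)" "\<forall>x\<in>V. ginv (g x) = x"
    using hg unfolding hemb_def by blast
  have fh: "holo_map fi Ui" using hf unfolding hemb_def by auto
  have cfi: "continuous_on Ui fi" using hemb_cont[OF hf] .
  have PV: "P \<subseteq> V" unfolding P_def by auto
  have gP: "g x = fi (finv (g x))" if "x \<in> P" for x using that finv(2) unfolding P_def by auto
  have PUi: "finv (g z) \<in> Ui" if "z \<in> P" for z
    using that finv(2) unfolding P_def by auto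
  have hP: "holo_map (\<lambda>z. finv (g z)) P"
    by (rule holo_map_comp[OF holo_map_subset[OF gh PV] finv(1)]) (auto simp: P_def)
  have e2: "hemb P V (\<lambda>z. z)"
    unfolding hemb_def
    using sP sV PV oP holo_map_id[of P] holo_map_id[of "(\<lambda>z. z) ` P"] by auto
  have img: "(\<lambda>z. finv (g z)) ` P = fi -` (g ` V) \<inter> Ui"
  proof
    show "(\<lambda>z. finv (g z)) ` P \<subseteq> fi -` (g ` V) \<inter> Ui"
    proof
      fix u assume "u \<in> (\<lambda>z. finv (g z)) ` P"
      then obtain z where z: "z \<in> P" "u = finv (g z)" by auto
      have "fi u = g z" using gP z by metis
      then show "u \<in> fi -` (g ` V) \<inter> Ui" using z PUi PV by auto
    qed
    show "fi -` (g ` V) \<inter> Ui \<subseteq> (\<lambda>z. finv (g z)) ` P"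
    proof
      fix u assume "u \<in> fi -` (g ` V) \<inter> Ui"
      then obtain v where v: "v \<in> V" "fi u = g v" "u \<in> Ui" by auto
      then have "v \<in> P" unfolding P_def by (metis (mono_tags, lifting) image_eqI mem_Collect_eq)
      moreover have "finv (g v) = u" using v finv(2) by metis
      ultimately show "u \<in> (\<lambda>z. finv (g z)) ` P" by (metis image_eqI)
    qed
  qed
  have e1: "hemb P Ui (\<lambda>z. finv (g z))"
  proof -
    have i1: "(\<lambda>z. finv (g z)) ` P \<subseteq> Ui" using PUi by auto
    have i2: "inj_on (\<lambda>z. finv (g z)) P"
    proof (rule inj_onI)
      fix x y assume "x \<in> P" "y \<in> P" "finv (g x) = finv (g y)"
      then have "g x = g y" using gP by metis
      then show "x = y" using ig PV \<open>x \<in> P\<close> \<open>y \<in> P\<close> unfolding inj_on_def by blast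
    qed
    have i3: "open ((\<lambda>z. finv (g z)) ` P)"
      unfolding img using cfi oUi ogV continuous_on_open_vimage by blast
    have i4: "holo_map (\<lambda>u. ginv (fi u)) ((\<lambda>z. finv (g z)) ` P)"
    proof (rule holo_map_comp[OF holo_map_subset[OF fh i1] gi(1)])
      show "fi ` (\<lambda>z. finv (g z)) ` P \<subseteq> g ` V" using img by auto
    qed
    have i5: "\<forall>x\<in>P. ginv (fi (finv (g x))) = x" using gP gi(2) PV by auto
    have i6: "\<exists>k. holo_map k ((\<lambda>z. finv (g z)) ` P) \<and> (\<forall>x\<in>P. k (finv (g x)) = x)"
      using i4 i5 by blast
    show ?thesis unfolding hemb_def using sP sUi hP i1 i2 i3 i6 by (intro conjI) assumption+
  qed
  have cm: "\<forall>x\<in>P. fi (finv (g x)) = g x" using gP by metis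
  have univ: "\<exists>h. hemb W P h \<and> (\<forall>x\<in>W. finv (g (h x)) = g1 x) \<and> (\<forall>x\<in>W. h x = g2 x) \<and>
             (\<forall>h'. hemb W P h' \<and> (\<forall>x\<in>W. finv (g (h' x)) = g1 x) \<and> (\<forall>x\<in>W. h' x = g2 x)
                   \<longrightarrow> (\<forall>x\<in>W. h' x = h x))"
    if w: "hemb W Ui g1" "hemb W V g2" "\<forall>x\<in>W. fi (g1 x) = g (g2 x)" for W g1 g2
  proof (intro exI[where x=g2] conjI)
    have "g2 ` W \<subseteq> P"
    proof
      fix y assume "y \<in> g2 ` W"
      then obtain x where x: "x \<in> W" "y = g2 x" by auto
      have "g2 x \<in> V" "g1 x \<in> Ui" using w x unfolding hemb_def by auto
      moreover have "g (g2 x) = fi (g1 x)" using w(3) x by auto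
      ultimately show "y \<in> P" unfolding P_def using x by auto
    qed
    then show "hemb W P g2" using hemb_restrict[OF w(2) sP] by blast
    show "\<forall>x\<in>W. finv (g (g2 x)) = g1 x" using w finv(2) unfolding hemb_def by (metis image_subset_iff)
  qed auto
  show ?thesis unfolding is_pullback_def P_def[symmetric]
    using hf hg e1 e2 cm univ by blast
qed


lemma site_pullback: "StC_site_pullback TYPE('n::finite)"
  unfolding StC_site_pullback_def
proof (intro allI impI, rule conjI)
  fix U :: "'n cpt set" and F V g
  assume a: "covering U F \<and> hemb V U g"
  have hg: "hemb V U g" using a by auto
  have hF: "hemb Ui U fi" if "(Ui, fi) \<in> F" for Ui fi using a that unfolding covering_def by auto
  have pbe: "\<exists>finv. is_pullback U Ui fi V g {v\<in>V. g v \<in> fi ` Ui} (\<lambda>z. finv (g z)) (\<lambda>z. z)"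
    if m0: "(Ui, fi) \<in> F" for Ui fi
  proof -
    obtain finv where "holo_map finv (fi ` Ui)" "\<forall>x\<in>Ui. finv (fi x) = x"
      using hF[OF m0] unfolding hemb_def by blast
    then show ?thesis using pb_exists[OF hF[OF m0] hg] by blast
  qed
  show "\<forall>(Ui, fi)\<in>F. \<exists>P p1 p2. is_pullback U Ui fi V g P p1 p2"
    using pbe by blast
  show "\<forall>P p1 p2. (\<forall>(Ui, fi)\<in>F. is_pullback U Ui fi V g (P (Ui, fi)) (p1 (Ui, fi)) (p2 (Ui, fi)))
        \<longrightarrow> covering V {(P (Ui, fi), p2 (Ui, fi)) | Ui fi. (Ui, fi) \<in> F}"
  proof (intro allI impI)
    fix P p1 p2
    assume pb: "\<forall>(Ui, fi)\<in>F. is_pullback U Ui fi V g (P (Ui, fi)) (p1 (Ui, fi)) (p2 (Ui, fi))"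
    define Fam where "Fam = {(P (Ui, fi), p2 (Ui, fi)) | Ui fi. (Ui, fi) \<in> F}"
    have sV: "stein_open V" using hg unfolding hemb_def by auto
    have memb: "hemb W V h" if m0: "(W, h) \<in> Fam" for W h
    proof -
      obtain Ui fi where m: "W = P (Ui, fi)" "h = p2 (Ui, fi)" "(Ui, fi) \<in> F"
        using m0 unfolding Fam_def by blast
      show ?thesis using pb m unfolding is_pullback_def by auto
    qed
    have un: "(\<Union>(W, h)\<in>Fam. h ` W) = V"
    proof
      show "(\<Union>(W, h)\<in>Fam. h ` W) \<subseteq> V" using memb unfolding hemb_def by fast
      show "V \<subseteq> (\<Union>(W, h)\<in>Fam. h ` W)"
      proof
        fix v assume v: "v \<in> V"
        then have "g v \<in> U" using hg unfolding hemb_def by auto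
        then obtain Ui fi where m: "(Ui, fi) \<in> F" "g v \<in> fi ` Ui"
          using a unfolding covering_def by auto
        obtain finv where p0: "is_pullback U Ui fi V g {v\<in>V. g v \<in> fi ` Ui} (\<lambda>z. finv (g z)) (\<lambda>z. z)"
          using pbe[OF m(1)] by blast
        define P0 where "P0 = {v\<in>V. g v \<in> fi ` Ui}"
        have vP0: "v \<in> P0" using v m(2) unfolding P0_def by auto
        have p0': "hemb P0 Ui (\<lambda>z. finv (g z))" "hemb P0 V (\<lambda>z. z)"
          "\<forall>x\<in>P0. fi (finv (g x)) = g x"
          using p0 unfolding is_pullback_def P0_def by auto
        have pbi: "is_pullback U Ui fi V g (P (Ui, fi)) (p1 (Ui, fi)) (p2 (Ui, fi))"
          using pb m(1) by auto
        then obtain h where h: "hemb P0 (P (Ui, fi)) h" "\<forall>x\<in>P0. p2 (Ui, fi) (h x) = x"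
          using p0' unfolding is_pullback_def by blast
        have "h v \<in> P (Ui, fi)" using h(1) vP0 unfolding hemb_def by auto
        moreover have "p2 (Ui, fi) (h v) = v" using h(2) vP0 by auto
        moreover have "(P (Ui, fi), p2 (Ui, fi)) \<in> Fam" unfolding Fam_def using m(1) by blast
        ultimately have "v \<in> (\<lambda>(W, h). h ` W) (P (Ui, fi), p2 (Ui, fi))"
          by (metis case_prod_conv image_eqI)
        then show "v \<in> (\<Union>(W, h)\<in>Fam. h ` W)"
          using \<open>(P (Ui, fi), p2 (Ui, fi)) \<in> Fam\<close> by blast
      qed
    qed
    have "covering V Fam" unfolding covering_def using sV memb un by blast
    then show "covering V {(P (Ui, fi), p2 (Ui, fi)) | Ui fi. (Ui, fi) \<in> F}"
      unfolding Fam_def .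
  qed
qed

theorem lemma1p3:
  shows "StC_verdier_site TYPE('n::finite)"
  unfolding StC_verdier_site_def using site_iso site_comp site_pullback site_diag by blast

end
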